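(* Let $R_7$ be the graph with vertex set $\{u_1,u_2,u_3,w_1,w_2,w_3,w_4\}$ and edge set $\{u_1u_2,u_2u_3,u_1w_1,u_1w_2,u_2w_1,u_2w_2,u_2w_3,u_2w_4,u_3w_3,u_3w_4\}$, and let $T_{10}$ be the graph with vertex set $\{x,v_1,\dots,v_{20}\}$ and edge set $\{xv_i:1\le i\le 20\}\cup\{v_{2i-1}v_{2i}:1\le i\le 10\}$. Let $\psi$ be a proper edge-colouring of the vertex-disjoint union of $R_7$ and $T_{10}$. Then there exist triangles $Q_1\subseteq T_{10}$ and $Q_2\subseteq R_7$ such that $\psi(E(Q_1))\cap\psi(E(Q_2))=\emptyset$.
   Context: An edge-colouring is proper if adjacent edges receive distinct colours. *)

theory Defs
  imports Main
begin

text \<open>Vertices of the vertex-disjoint union of R7 and T10.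
  R7 uses U 1..U 3, W 1..W 4; T10 uses X, V 1..V 20.\<close>
datatype vert = U nat | W nat | X | V nat

text \<open>Simple graphs are given by their edge sets (sets of 2-element vertex sets).\<close>

definition R7_edges :: "vert set set" where
  "R7_edges = {{U 1, U 2}, {U 2, U 3}, {U 1, W 1}, {U 1, W 2}, {U 2, W 1},
               {U 2, W 2}, {U 2, W 3}, {U 2, W 4}, {U 3, W 3}, {U 3, W 4}}"

definition T10_edges :: "vert set set" where
  "T10_edges = {{X, V i} | i. 1 \<le> i \<and> i \<le> 20}
             \<union> {{V (2*i - 1), V (2*i)} | i. 1 \<le> i \<and> i \<le> 10}"

definition union_edges :: "vert set set" where
  "union_edges = R7_edges \<union> T10_edges"

definition proper_edge_colouring :: "'v set set \<Rightarrow> ('v set \<Rightarrow> 'c) \<Rightarrow> bool" where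
  "proper_edge_colouring E \<psi> \<longleftrightarrow>
     (\<forall>e\<in>E. \<forall>f\<in>E. e \<noteq> f \<and> e \<inter> f \<noteq> {} \<longrightarrow> \<psi> e \<noteq> \<psi> f)"

definition triangle_in :: "'v set set \<Rightarrow> 'v \<Rightarrow> 'v \<Rightarrow> 'v \<Rightarrow> bool" where
  "triangle_in E a b c \<longleftrightarrow> distinct [a, b, c] \<and> {a, b} \<in> E \<and> {b, c} \<in> E \<and> {a, c} \<in> E"

definition tri_edges :: "'v \<Rightarrow> 'v \<Rightarrow> 'v \<Rightarrow> 'v set set" where
  "tri_edges a b c = {{a, b}, {b, c}, {a, c}}"

end

theory Submission
  imports Defs
begin

lemma R7_list: "R7_edges = set [{U 1, U 2}, {U 2, U 3}, {U 1, W 1}, {U 1, W 2}, {U 2, W 1},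
               {U 2, W 2}, {U 2, W 3}, {U 2, W 4}, {U 3, W 3}, {U 3, W 4}]"
  by (simp add: R7_edges_def)

lemma card_R7: "card R7_edges \<le> 10"
  unfolding R7_list by (rule order_trans[OF card_length]) simp

lemma cov_aux: fixes a b c d e f g h i j y p :: 'c
  assumes D: "distinct [a, f, b, d, c, e, h, j, g, i]"
  and qA: "y \<in> {a, c, b} \<or> p \<in> {a, c, b}"
  and qB: "y \<in> {a, e, d} \<or> p \<in> {a, e, d}"
  and qC: "y \<in> {f, g, h} \<or> p \<in> {f, g, h}"
  and qD: "y \<in> {f, i, j} \<or> p \<in> {f, i, j}"
  and yR: "y \<in> {a, f, b, d, c, e, h, j, g, i}"
  shows "y = a \<or> y = f"
proof -
  have D': "a \<noteq> f" "a \<noteq> b" "a \<noteq> d" "a \<noteq> c" "a \<noteq> e" "a \<noteq> h" "a \<noteq> j" "a \<noteq> g" "a \<noteq> i"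
    "f \<noteq> b" "f \<noteq> d" "f \<noteq> c" "f \<noteq> e" "f \<noteq> h" "f \<noteq> j" "f \<noteq> g" "f \<noteq> i"
    "b \<noteq> d" "b \<noteq> c" "b \<noteq> e" "b \<noteq> h" "b \<noteq> j" "b \<noteq> g" "b \<noteq> i"
    "d \<noteq> c" "d \<noteq> e" "d \<noteq> h" "d \<noteq> j" "d \<noteq> g" "d \<noteq> i"
    "c \<noteq> e" "c \<noteq> h" "c \<noteq> j" "c \<noteq> g" "c \<noteq> i"
    "e \<noteq> h" "e \<noteq> j" "e \<noteq> g" "e \<noteq> i"
    "h \<noteq> j" "h \<noteq> g" "h \<noteq> i" "j \<noteq> g" "j \<noteq> i" "g \<noteq> i"
    using D by auto
  have AC: "p \<in> {a, c, b} \<Longrightarrow> p \<in> {f, g, h} \<Longrightarrow> False" using D' by auto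
  have AD: "p \<in> {a, c, b} \<Longrightarrow> p \<in> {f, i, j} \<Longrightarrow> False" using D' by auto
  have BC: "p \<in> {a, e, d} \<Longrightarrow> p \<in> {f, g, h} \<Longrightarrow> False" using D' by auto
  have BD: "p \<in> {a, e, d} \<Longrightarrow> p \<in> {f, i, j} \<Longrightarrow> False" using D' by auto
  show ?thesis
  proof (rule ccontr)
    assume ny: "\<not> (y = a \<or> y = f)"
    from yR ny have "y \<in> {b, c} \<or> y \<in> {d, e} \<or> y \<in> {g, h} \<or> y \<in> {i, j}" by blast
    thus False
    proof (elim disjE)
      assume "y \<in> {b, c}"
      hence "y \<notin> {a, e, d}" "y \<notin> {f, g, h}" using D' by auto
      thus False using qB qC BC by blast
    next
      assume "y \<in> {d, e}"
      hence "y \<notin> {a, c, b}" "y \<notin> {f, g, h}" using D' by auto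
      thus False using qA qC AC by blast
    next
      assume "y \<in> {g, h}"
      hence "y \<notin> {a, c, b}" "y \<notin> {f, i, j}" using D' by auto
      thus False using qA qD AD by blast
    next
      assume "y \<in> {i, j}"
      hence "y \<notin> {a, c, b}" "y \<notin> {f, g, h}" using D' by auto
      thus False using qA qC AC by blast
    qed
  qed
qed

theorem claim5p3:
  fixes \<psi> :: "vert set \<Rightarrow> 'c"
  assumes "proper_edge_colouring union_edges \<psi>"
  shows "\<exists>a b c a' b' c'. triangle_in T10_edges a b c \<and> triangle_in R7_edges a' b' c' \<and>
           \<psi> ` tri_edges a b c \<inter> \<psi> ` tri_edges a' b' c' = {}"
proof (rule ccontr)
  assume H: "\<not> ?thesis"
  let ?a = "\<psi> {U 1, U 2}" and ?b = "\<psi> {U 1, W 1}" and ?c = "\<psi> {U 2, W 1}"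
  let ?d = "\<psi> {U 1, W 2}" and ?e = "\<psi> {U 2, W 2}" and ?f = "\<psi> {U 2, U 3}"
  let ?g = "\<psi> {U 3, W 3}" and ?h = "\<psi> {U 2, W 3}" and ?i = "\<psi> {U 3, W 4}"
  let ?j = "\<psi> {U 2, W 4}"
  let ?R = "\<psi> ` R7_edges"
  have P: "\<And>e f. e \<in> union_edges \<Longrightarrow> f \<in> union_edges \<Longrightarrow> e \<noteq> f \<Longrightarrow> e \<inter> f \<noteq> {} \<Longrightarrow> \<psi> e \<noteq> \<psi> f"
    using assms unfolding proper_edge_colouring_def by blast
  have P7: "\<And>e f. e \<in> R7_edges \<Longrightarrow> f \<in> R7_edges \<Longrightarrow> e \<noteq> f \<Longrightarrow> e \<inter> f \<noteq> {} \<Longrightarrow> \<psi> e \<noteq> \<psi> f"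
    using P unfolding union_edges_def by blast
  have T10x: "\<And>i. 1 \<le> i \<Longrightarrow> i \<le> 20 \<Longrightarrow> {X, V i} \<in> T10_edges"
    unfolding T10_edges_def by blast
  have T10p: "\<And>k. 1 \<le> k \<Longrightarrow> k \<le> 10 \<Longrightarrow> {V (2*k-1), V (2*k)} \<in> T10_edges"
    unfolding T10_edges_def by blast
  have Xinj: "\<And>i j. 1 \<le> i \<Longrightarrow> i \<le> 20 \<Longrightarrow> 1 \<le> j \<Longrightarrow> j \<le> 20 \<Longrightarrow> i \<noteq> j \<Longrightarrow> \<psi> {X, V i} \<noteq> \<psi> {X, V j}"
    by (rule P) (auto simp: union_edges_def T10x doubleton_eq_iff)
  have H': "\<And>a b c a' b' c'. triangle_in T10_edges a b c \<Longrightarrow> triangle_in R7_edges a' b' c' \<Longrightarrow>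
     \<psi> ` tri_edges a b c \<inter> \<psi> ` tri_edges a' b' c' \<noteq> {}"
  proof
    fix a b c a' b' c'
    assume t1: "triangle_in T10_edges a b c" and t2: "triangle_in R7_edges a' b' c'"
      and e: "\<psi> ` tri_edges a b c \<inter> \<psi> ` tri_edges a' b' c' = {}"
    show False apply (rule notE[OF H]) apply (rule exI)+ apply (intro conjI) apply (rule t1) apply (rule t2) apply (rule e) done
  qed
  have tri: "\<And>k. 1 \<le> k \<Longrightarrow> k \<le> 10 \<Longrightarrow> triangle_in T10_edges X (V (2*k-1)) (V (2*k))"
  proof -
    fix k :: nat assume k: "1 \<le> k" "k \<le> 10"
    have "distinct [X, V (2*k-1), V (2*k)]" using k by simp
    moreover have "{X, V (2*k-1)} \<in> T10_edges" using k by (intro T10x) auto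
    moreover have "{X, V (2*k)} \<in> T10_edges" using k by (intro T10x) auto
    ultimately show "triangle_in T10_edges X (V (2*k-1)) (V (2*k))"
      unfolding triangle_in_def using T10p[OF k] by blast
  qed
  have meet: "\<And>k a' b' c'. 1 \<le> k \<Longrightarrow> k \<le> 10 \<Longrightarrow> triangle_in R7_edges a' b' c' \<Longrightarrow>
     \<psi> ` tri_edges X (V (2*k-1)) (V (2*k)) \<inter> \<psi> ` tri_edges a' b' c' \<noteq> {}"
    by (rule H'[OF tri])
  have tA: "triangle_in R7_edges (U 1) (U 2) (W 1)" by (simp add: triangle_in_def R7_edges_def)
  have tB: "triangle_in R7_edges (U 1) (U 2) (W 2)" by (simp add: triangle_in_def R7_edges_def)
  have tC: "triangle_in R7_edges (U 2) (U 3) (W 3)" by (simp add: triangle_in_def R7_edges_def)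
  have tD: "triangle_in R7_edges (U 2) (U 3) (W 4)" by (simp add: triangle_in_def R7_edges_def)
  have MA: "{\<psi> {X, V (2*k-1)}, \<psi> {V (2*k-1), V (2*k)}, \<psi> {X, V (2*k)}} \<inter> {?a, ?c, ?b} \<noteq> {}"
    if k: "1 \<le> k" "k \<le> 10" for k
    using meet[OF k tA] unfolding tri_edges_def image_insert image_empty .
  have MB: "{\<psi> {X, V (2*k-1)}, \<psi> {V (2*k-1), V (2*k)}, \<psi> {X, V (2*k)}} \<inter> {?a, ?e, ?d} \<noteq> {}"
    if k: "1 \<le> k" "k \<le> 10" for k
    using meet[OF k tB] unfolding tri_edges_def image_insert image_empty .
  have MC: "{\<psi> {X, V (2*k-1)}, \<psi> {V (2*k-1), V (2*k)}, \<psi> {X, V (2*k)}} \<inter> {?f, ?g, ?h} \<noteq> {}"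
    if k: "1 \<le> k" "k \<le> 10" for k
    using meet[OF k tC] unfolding tri_edges_def image_insert image_empty .
  have MD: "{\<psi> {X, V (2*k-1)}, \<psi> {V (2*k-1), V (2*k)}, \<psi> {X, V (2*k)}} \<inter> {?f, ?i, ?j} \<noteq> {}"
    if k: "1 \<le> k" "k \<le> 10" for k
    using meet[OF k tD] unfolding tri_edges_def image_insert image_empty .
  have R: "?R = {?a, ?f, ?b, ?d, ?c, ?e, ?h, ?j, ?g, ?i}" by (simp add: R7_edges_def)
  have d1: "?a \<noteq> ?c" "?a \<noteq> ?e" "?a \<noteq> ?f" "?a \<noteq> ?h" "?a \<noteq> ?j"
     "?c \<noteq> ?e" "?c \<noteq> ?f" "?c \<noteq> ?h" "?c \<noteq> ?j" "?e \<noteq> ?f" "?e \<noteq> ?h" "?e \<noteq> ?j"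
     "?f \<noteq> ?h" "?f \<noteq> ?j" "?h \<noteq> ?j" "?a \<noteq> ?b" "?a \<noteq> ?d" "?b \<noteq> ?d"
     "?f \<noteq> ?g" "?f \<noteq> ?i" "?g \<noteq> ?i" "?b \<noteq> ?c" "?d \<noteq> ?e" "?g \<noteq> ?h" "?i \<noteq> ?j"
    by (rule P7; simp add: R7_edges_def doubleton_eq_iff)+
  define I where "I = {i\<in>{1..20::nat}. \<psi> {X, V i} \<in> ?R}"
  have L1: "\<And>k. 1 \<le> k \<Longrightarrow> k \<le> 10 \<Longrightarrow> 2*k-1 \<in> I \<or> 2*k \<in> I"
  proof (rule ccontr)
    fix k :: nat assume k: "1 \<le> k" "k \<le> 10" and n: "\<not> (2*k-1 \<in> I \<or> 2*k \<in> I)"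
    hence n1: "\<psi> {X, V (2*k-1)} \<notin> ?R" and n2: "\<psi> {X, V (2*k)} \<notin> ?R" unfolding I_def by auto
    let ?p = "\<psi> {V (2*k-1), V (2*k)}"
    have sA: "{?a, ?c, ?b} \<subseteq> ?R" "{?a, ?e, ?d} \<subseteq> ?R" "{?f, ?g, ?h} \<subseteq> ?R" "{?f, ?i, ?j} \<subseteq> ?R"
      unfolding R by auto
    have pA: "?p \<in> {?a, ?c, ?b}" using MA[OF k] n1 n2 sA(1) by blast
    have pB: "?p \<in> {?a, ?e, ?d}" using MB[OF k] n1 n2 sA(2) by blast
    have pC: "?p \<in> {?f, ?g, ?h}" using MC[OF k] n1 n2 sA(3) by blast
    have pD: "?p \<in> {?f, ?i, ?j}" using MD[OF k] n1 n2 sA(4) by blast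
    show False using pA pB pC pD d1 by auto
  qed
  have finR7: "finite R7_edges" by (simp add: R7_edges_def)
  have cIR: "card I \<le> card ?R"
  proof (rule card_inj_on_le[of "\<lambda>i. \<psi> {X, V i}"])
    show "inj_on (\<lambda>i. \<psi> {X, V i}) I"
      by (rule inj_onI) (use Xinj in \<open>auto simp: I_def\<close>)
    show "(\<lambda>i. \<psi> {X, V i}) ` I \<subseteq> ?R" by (auto simp: I_def)
    show "finite ?R" using finR7 by simp
  qed
  have cR: "card ?R \<le> card R7_edges" using finR7 by (rule card_image_le)
  define g where "g k = (if 2*k-1 \<in> I then 2*k-1 else 2*k)" for k :: nat
  have gI: "g k \<in> I" if "1 \<le> k" "k \<le> 10" for k using L1[OF that] by (auto simp: g_def)
  have gdiv: "(g k + 1) div 2 = k" if "1 \<le> k" for k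
  proof -
    have h1: "(2*k-1+1) div 2 = k" using that by simp
    have h2: "(2*k+1) div 2 = k" by simp
    show ?thesis
    proof (cases "2*k-1 \<in> I")
      case True thus ?thesis unfolding g_def using h1 by (subst if_P) auto
    next
      case False thus ?thesis unfolding g_def using h2 by (subst if_not_P) auto
    qed
  qed
  have ginj: "inj_on g {1..10}"
    by (rule inj_onI) (metis gdiv atLeastAtMost_iff)
  have cg: "card (g ` {1..10}) = 10" using ginj by (simp add: card_image)
  have gsub: "g ` {1..10} \<subseteq> I" using gI by auto
  have finI: "finite I" unfolding I_def by simp
  have c10: "10 \<le> card I" using card_mono[OF finI gsub] cg by simp
  have one: "\<not> (2*k-1 \<in> I \<and> 2*k \<in> I)" if k: "1 \<le> k" "k \<le> 10" for k
  proof
    assume both: "2*k-1 \<in> I \<and> 2*k \<in> I"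
    have gk: "g k = 2*k-1" using both by (simp add: g_def)
    have nin: "2*k \<notin> g ` {1..10}"
    proof
      assume "2*k \<in> g ` {1..10}"
      then obtain k' where k': "k' \<in> {1..10}" "g k' = 2*k" by auto
      have "k' = (2*k + 1) div 2" using gdiv[of k'] k' by simp
      also have "\<dots> = k" by simp
      finally show False using gk k' k by simp
    qed
    have "insert (2*k) (g ` {1..10}) \<subseteq> I" using gsub both by auto
    hence "card (insert (2*k) (g ` {1..10})) \<le> card I" using finI by (rule card_mono[rotated])
    moreover have "card (insert (2*k) (g ` {1..10})) = 11" using nin cg by simp
    ultimately show False using cIR cR card_R7 by simp
  qed
  have "card ?R = card R7_edges" using c10 cIR cR card_R7 by simp
  hence inj: "inj_on \<psi> R7_edges" by (rule eq_card_imp_inj_on[OF finR7])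
  have inj': "\<And>e e'. \<psi> e = \<psi> e' \<Longrightarrow> e \<in> R7_edges \<Longrightarrow> e' \<in> R7_edges \<Longrightarrow> e = e'"
    using inj by (meson inj_onD)
  have D: "distinct [?a, ?f, ?b, ?d, ?c, ?e, ?h, ?j, ?g, ?i]"
    apply simp
    apply (intro conjI notI)
    apply (drule inj'; simp add: R7_edges_def doubleton_eq_iff)+
    done
  have key: "\<exists>j\<in>{2*k-1, 2*k}. \<psi> {X, V j} = ?a \<or> \<psi> {X, V j} = ?f" if k: "1 \<le> k" "k \<le> 10" for k
  proof -
    let ?p = "\<psi> {V (2*k-1), V (2*k)}"
    have sA: "{?a, ?c, ?b} \<subseteq> ?R" "{?a, ?e, ?d} \<subseteq> ?R" "{?f, ?g, ?h} \<subseteq> ?R" "{?f, ?i, ?j} \<subseteq> ?R"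
      unfolding R by auto
    have cov: "y = ?a \<or> y = ?f" if y: "y \<in> ?R" and z: "z \<notin> ?R"
      and hA: "{y, ?p, z} \<inter> {?a, ?c, ?b} \<noteq> {}" and hB: "{y, ?p, z} \<inter> {?a, ?e, ?d} \<noteq> {}"
      and hC: "{y, ?p, z} \<inter> {?f, ?g, ?h} \<noteq> {}" and hD: "{y, ?p, z} \<inter> {?f, ?i, ?j} \<noteq> {}" for y z
    proof -
      have qA: "y \<in> {?a, ?c, ?b} \<or> ?p \<in> {?a, ?c, ?b}" using hA z sA(1) by blast
      have qB: "y \<in> {?a, ?e, ?d} \<or> ?p \<in> {?a, ?e, ?d}" using hB z sA(2) by blast
      have qC: "y \<in> {?f, ?g, ?h} \<or> ?p \<in> {?f, ?g, ?h}" using hC z sA(3) by blast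
      have qD: "y \<in> {?f, ?i, ?j} \<or> ?p \<in> {?f, ?i, ?j}" using hD z sA(4) by blast
      have yR: "y \<in> {?a, ?f, ?b, ?d, ?c, ?e, ?h, ?j, ?g, ?i}" using y R by simp
      show ?thesis by (rule cov_aux[OF D qA qB qC qD yR])
    qed
    have sw: "\<And>u v w S. {u, v, w} \<inter> S \<noteq> {} \<Longrightarrow> {w, v, u} \<inter> S \<noteq> {}" by blast
    have r1: "2*k-1 \<in> {1..20}" "2*k \<in> {1..20}" using k by auto
    show ?thesis
    proof (cases "2*k-1 \<in> I")
      case True
      hence n: "2*k \<notin> I" using one[OF k] by blast
      have "\<psi> {X, V (2*k-1)} = ?a \<or> \<psi> {X, V (2*k-1)} = ?f"
      proof (rule cov)
        show "\<psi> {X, V (2*k-1)} \<in> ?R" using True unfolding I_def by blast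
        show "\<psi> {X, V (2*k)} \<notin> ?R" using n r1 unfolding I_def by blast
      qed (rule MA[OF k] MB[OF k] MC[OF k] MD[OF k])+
      thus ?thesis by blast
    next
      case False
      hence n: "2*k \<in> I" using L1[OF k] by blast
      have "\<psi> {X, V (2*k)} = ?a \<or> \<psi> {X, V (2*k)} = ?f"
      proof (rule cov)
        show "\<psi> {X, V (2*k)} \<in> ?R" using n unfolding I_def by blast
        show "\<psi> {X, V (2*k-1)} \<notin> ?R" using False r1 unfolding I_def by blast
      qed (rule sw[OF MA[OF k]] sw[OF MB[OF k]] sw[OF MC[OF k]] sw[OF MD[OF k]])+
      thus ?thesis by blast
    qed
  qed
  obtain j1 where j1: "j1 \<in> {1, 2}" "\<psi> {X, V j1} = ?a \<or> \<psi> {X, V j1} = ?f" using key[of 1] by auto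
  obtain j2 where j2: "j2 \<in> {3, 4}" "\<psi> {X, V j2} = ?a \<or> \<psi> {X, V j2} = ?f" using key[of 2] by auto
  obtain j3 where j3: "j3 \<in> {5, 6}" "\<psi> {X, V j3} = ?a \<or> \<psi> {X, V j3} = ?f" using key[of 3] by auto
  have "\<psi> {X, V j1} \<noteq> \<psi> {X, V j2}" by (rule Xinj) (use j1 j2 in auto)
  moreover have "\<psi> {X, V j1} \<noteq> \<psi> {X, V j3}" by (rule Xinj) (use j1 j3 in auto)
  moreover have "\<psi> {X, V j2} \<noteq> \<psi> {X, V j3}" by (rule Xinj) (use j2 j3 in auto)
  ultimately show False using j1(2) j2(2) j3(2) by metis
qed
end
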